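(* Let $L$ be an $R_0$-algebra and $k\in[0,1)$. Given any chain of fated filters $F_0\subset F_1\subset\cdots\subset F_n=L$ of $L$, there exists an $(\in,\in\vee q_k)$-fuzzy fated filter $\mu$ of $L$ whose level fated filters $U(\mu;t)=\{x\in L\mid\mu(x)\ge t\}$, $t\in(0,\tfrac{1-k}{2}]$, are precisely the members $F_0,F_1,\dots,F_n$ of the chain, and such that $U(\mu;\tfrac{1-k}{2})=F_0$.
   Context: An $R_0$-algebra is a bounded distributive lattice $(L,\wedge,\vee,0,1)$ with an order-reversing involution $\neg$ and a binary operation $\to$ such that for all $x,y,z\in L$: $x\to y=\neg y\to\neg x$; $1\to x=x$; $(y\to z)\wedge((x\to y)\to(x\to z))=y\to z$; $x\to(y\to z)=y\to(x\to z)$; $x\to(y\vee z)=(x\to y)\vee(x\to z)$; $(x\to y)\vee((x\to y)\to(\neg x\vee y))=1$. A fated filter of $L$ is a nonempty subset $A\subseteq L$ with $1\in A$ such that for all $x,y\in L$ and $a\in A$, $a\to((x\to y)\to x)\in A$ implies $x\in A$. For $x\in L$, $t\in(0,1]$ and a fuzzy subset $\mu:L\to[0,1]$: $x_t\in\mu$ iff $\mu(x)\ge t$; $x_t\,q_k\,\mu$ iff $\mu(x)+t+k>1$; $x_t\in\vee q_k\,\mu$ iff $x_t\in\mu$ or $x_t\,q_k\,\mu$. $\mu$ is an $(\in,\in\vee q_k)$-fuzzy fated filter of $L$ if (1) for all $x\in L$, $t\in(0,1]$: $x_t\in\mu\Rightarrow 1_t\in\vee q_k\,\mu$; and (2) for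 all $x,a,y\in L$, $t,s\in(0,1]$: if $(a\to((x\to y)\to x))_t\in\mu$ and $a_s\in\mu$ then $x_{\min\{t,s\}}\in\vee q_k\,\mu$. *)

theory Defs
  imports Main "HOL.Real"
begin

text \<open>An R0-algebra: the carrier is the whole type 'a, which is a bounded distributive
lattice (inf, sup, bot = 0, top = 1); neg is an order-reversing involution and imp
is the implication.\<close>

definition R0_algebra :: "('a::{bounded_lattice,distrib_lattice} \<Rightarrow> 'a) \<Rightarrow> ('a \<Rightarrow> 'a \<Rightarrow> 'a) \<Rightarrow> bool" where
  "R0_algebra neg imp \<longleftrightarrow>
     (\<forall>x. neg (neg x) = x) \<and>
     (\<forall>x y. x \<le> y \<longrightarrow> neg y \<le> neg x) \<and>
     (\<forall>x y. imp x y = imp (neg y) (neg x)) \<and>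
     (\<forall>x. imp top x = x) \<and>
     (\<forall>x y z. inf (imp y z) (imp (imp x y) (imp x z)) = imp y z) \<and>
     (\<forall>x y z. imp x (imp y z) = imp y (imp x z)) \<and>
     (\<forall>x y z. imp x (sup y z) = sup (imp x y) (imp x z)) \<and>
     (\<forall>x y. sup (imp x y) (imp (imp x y) (sup (neg x) y)) = top)"

definition fated_filter :: "('a::bounded_lattice \<Rightarrow> 'a \<Rightarrow> 'a) \<Rightarrow> 'a set \<Rightarrow> bool" where
  "fated_filter imp A \<longleftrightarrow> A \<noteq> {} \<and> top \<in> A \<and>
     (\<forall>x y a. a \<in> A \<longrightarrow> imp a (imp (imp x y) x) \<in> A \<longrightarrow> x \<in> A)"

definition fin :: "('a \<Rightarrow> real) \<Rightarrow> 'a \<Rightarrow> real \<Rightarrow> bool" where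
  "fin mu x t \<longleftrightarrow> mu x \<ge> t"

definition fq :: "real \<Rightarrow> ('a \<Rightarrow> real) \<Rightarrow> 'a \<Rightarrow> real \<Rightarrow> bool" where
  "fq k mu x t \<longleftrightarrow> mu x + t + k > 1"

definition finvq :: "real \<Rightarrow> ('a \<Rightarrow> real) \<Rightarrow> 'a \<Rightarrow> real \<Rightarrow> bool" where
  "finvq k mu x t \<longleftrightarrow> fin mu x t \<or> fq k mu x t"

definition fuzzy_subset :: "('a \<Rightarrow> real) \<Rightarrow> bool" where
  "fuzzy_subset mu \<longleftrightarrow> (\<forall>x. 0 \<le> mu x \<and> mu x \<le> 1)"

definition in_invq_fuzzy_fated_filter ::
  "real \<Rightarrow> ('a::bounded_lattice \<Rightarrow> 'a \<Rightarrow> 'a) \<Rightarrow> ('a \<Rightarrow> real) \<Rightarrow> bool" where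
  "in_invq_fuzzy_fated_filter k imp mu \<longleftrightarrow> fuzzy_subset mu \<and>
     (\<forall>x t. 0 < t \<and> t \<le> 1 \<longrightarrow> fin mu x t \<longrightarrow> finvq k mu top t) \<and>
     (\<forall>x a y t s. 0 < t \<and> t \<le> 1 \<and> 0 < s \<and> s \<le> 1 \<longrightarrow>
        fin mu (imp a (imp (imp x y) x)) t \<longrightarrow> fin mu a s \<longrightarrow> finvq k mu x (min t s))"

definition level_set :: "('a \<Rightarrow> real) \<Rightarrow> real \<Rightarrow> 'a set" where
  "level_set mu t = {x. mu x \<ge> t}"

end

theory Submission
  imports Defs
begin

theorem theorem3p26:
  fixes neg :: "'a::{bounded_lattice,distrib_lattice} \<Rightarrow> 'a"
    and imp :: "'a \<Rightarrow> 'a \<Rightarrow> 'a"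
    and k :: real and n :: nat and F :: "nat \<Rightarrow> 'a set"
  assumes "R0_algebra neg imp"
    and "0 \<le> k" and "k < 1"
    and "\<And>i. i \<le> n \<Longrightarrow> fated_filter imp (F i)"
    and "\<And>i. i < n \<Longrightarrow> F i \<subset> F (Suc i)"
    and "F n = UNIV"
  shows "\<exists>mu. in_invq_fuzzy_fated_filter k imp mu
           \<and> level_set mu ` {t. 0 < t \<and> t \<le> (1 - k) / 2} = F ` {..n}
           \<and> level_set mu ((1 - k) / 2) = F 0"
proof -
  define c :: real where "c = (1 - k) / 2"
  define m :: real where "m = real n + 1"
  have c0: "0 < c" "c \<le> 1/2" using assms(2,3) by (auto simp: c_def)
  have m0: "m > 0" by (simp add: m_def)
  have mono: "F i \<subseteq> F i'" if "i \<le> i'" "i' \<le> n" for i i'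
    using that
  proof (induction i' rule: dec_induct)
    case base then show ?case by simp
  next
    case (step q) then show ?case using assms(5)[of q] by auto
  qed
  define j where "j x = (LEAST i. x \<in> F i)" for x
  have jin: "x \<in> F (j x)" for x
    unfolding j_def by (rule LeastI[of _ n]) (simp add: assms(6))
  have jle: "j x \<le> n" for x
    unfolding j_def by (rule Least_le) (simp add: assms(6))
  have memj: "x \<in> F i \<longleftrightarrow> j x \<le> i" if "i \<le> n" for x i
  proof
    assume "x \<in> F i" then show "j x \<le> i" unfolding j_def by (rule Least_le)
  next
    assume "j x \<le> i" then show "x \<in> F i" using mono[OF _ that] jin by blast
  qed
  define mu where "mu x = c * (m - real (j x)) / m" for x
  have muiff: "mu x \<ge> t \<longleftrightarrow> real (j x) \<le> m - t * m / c" for x t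
  proof -
    have "mu x \<ge> t \<longleftrightarrow> t * m \<le> c * (m - real (j x))"
      unfolding mu_def using m0 by (simp add: pos_le_divide_eq)
    also have "\<dots> \<longleftrightarrow> t * m / c \<le> m - real (j x)"
      using c0 by (simp add: pos_divide_le_eq mult.commute)
    finally show ?thesis by linarith
  qed
  have mub: "c / m \<le> mu x \<and> mu x \<le> c" for x
  proof -
    have "real (j x) \<le> real n" using jle by simp
    hence "1 \<le> m - real (j x)" "m - real (j x) \<le> m" by (auto simp: m_def)
    thus ?thesis unfolding mu_def using c0 m0
      by (auto simp: divide_right_mono pos_divide_le_eq)
  qed
  have mulev: "level_set mu (c * (m - real i) / m) = F i" if "i \<le> n" for i
  proof -
    have "x \<in> level_set mu (c * (m - real i) / m) \<longleftrightarrow> j x \<le> i" for x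
    proof -
      have "c * (m - real i) / m * m / c = m - real i" using c0 m0 by simp
      thus ?thesis unfolding level_set_def using muiff[of "c * (m - real i) / m" x] by simp
    qed
    thus ?thesis using memj[OF that] by auto
  qed
  have lev: "\<exists>i\<le>n. level_set mu t = F i" if "0 < t" "t \<le> c" for t
  proof -
    define i where "i = nat (floor (m - t * m / c))"
    have a: "t * m / c \<le> m" using that c0 m0 by (simp add: pos_divide_le_eq mult_right_mono)
    have b: "t * m / c > 0" using that c0 m0 by simp
    have fi: "real_of_int (floor (m - t * m / c)) = real i" using a unfolding i_def by simp
    have "i \<le> n"
    proof -
      have "m - t * m / c < of_int (int n + 1)" using b by (simp add: m_def)
      hence "floor (m - t * m / c) < int n + 1" by (simp only: floor_less_iff)
      thus ?thesis unfolding i_def by linarith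
    qed
    moreover have "level_set mu t = F i"
    proof -
      have "x \<in> level_set mu t \<longleftrightarrow> j x \<le> i" for x
      proof -
        have "real (j x) \<le> m - t * m / c \<longleftrightarrow> int (j x) \<le> floor (m - t * m / c)"
          by (simp add: le_floor_iff)
        also have "\<dots> \<longleftrightarrow> j x \<le> i" using a unfolding i_def by linarith
        finally show ?thesis unfolding level_set_def using muiff by simp
      qed
      thus ?thesis using memj[OF \<open>i \<le> n\<close>] by auto
    qed
    ultimately show ?thesis by blast
  qed
  have ff: "in_invq_fuzzy_fated_filter k imp mu"
    unfolding in_invq_fuzzy_fated_filter_def
  proof (intro conjI allI impI)
    show "fuzzy_subset mu" unfolding fuzzy_subset_def
    proof
      fix x
      have "0 \<le> c / m" using c0 m0 by simp
      thus "0 \<le> mu x \<and> mu x \<le> 1" using mub[of x] c0 by linarith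
    qed
  next
    fix x and t :: real
    assume "fin mu x t"
    have "top \<in> F 0" using assms(4)[of 0] by (simp add: fated_filter_def)
    hence "j top = 0" using memj[of 0 top] by simp
    hence "mu top = c" unfolding mu_def using m0 by simp
    thus "finvq k mu top t" using \<open>fin mu x t\<close> mub[of x]
      unfolding finvq_def fin_def by simp
  next
    fix x a y :: 'a and t s :: real
    assume h1: "fin mu (imp a (imp (imp x y) x)) t" and h2: "fin mu a s"
    define w where "w = imp a (imp (imp x y) x)"
    define i where "i = max (j a) (j w)"
    have "i \<le> n" using jle unfolding i_def by (simp add: max_def)
    have "a \<in> F i" "w \<in> F i" using memj[OF \<open>i \<le> n\<close>] unfolding i_def by auto
    hence "x \<in> F i" using assms(4)[OF \<open>i \<le> n\<close>] unfolding fated_filter_def w_def by blast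
    hence jx: "j x \<le> max (j a) (j w)" using memj[OF \<open>i \<le> n\<close>] i_def by simp
    have mm: "mu p \<le> mu q" if "j q \<le> j p" for p q
    proof -
      have "c * (m - real (j p)) \<le> c * (m - real (j q))" using that c0 by (intro mult_left_mono) auto
      thus ?thesis unfolding mu_def using m0 by (simp add: divide_right_mono)
    qed
    have "min (mu a) (mu w) \<le> mu x"
    proof (cases "j a \<le> j w")
      case True thus ?thesis using mm[of x w] jx by simp
    next
      case False thus ?thesis using mm[of x a] jx by simp
    qed
    thus "finvq k mu x (min t s)" using h1 h2 unfolding finvq_def fin_def w_def
      by linarith
  qed
  have "level_set mu ` {t. 0 < t \<and> t \<le> c} = F ` {..n}"
  proof
    show "level_set mu ` {t. 0 < t \<and> t \<le> c} \<subseteq> F ` {..n}" using lev by auto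
  next
    show "F ` {..n} \<subseteq> level_set mu ` {t. 0 < t \<and> t \<le> c}"
    proof
      fix A assume "A \<in> F ` {..n}"
      then obtain i where i: "i \<le> n" "A = F i" by auto
      have "1 \<le> m - real i" "m - real i \<le> m" using i by (auto simp: m_def)
      hence "0 < c * (m - real i) / m" "c * (m - real i) / m \<le> c"
        using c0 m0 by (auto simp: pos_divide_le_eq)
      thus "A \<in> level_set mu ` {t. 0 < t \<and> t \<le> c}" using mulev[OF i(1)] i(2)
        by (auto intro!: image_eqI[of _ _ "c * (m - real i) / m"])
    qed
  qed
  moreover have "level_set mu c = F 0" using mulev[of 0] m0 by simp
  ultimately show ?thesis using ff unfolding c_def by blast
qed

end
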